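(* Let $P\subseteq\mathbb{R}^2$ be a nonempty closed convex set such that $\tau P=P^{\circ}$. If $\gamma$ is a real $2\times 2$ matrix with $\det\gamma=\pm1$, then $\tau(\gamma P)=(\gamma P)^{\circ}$.
   Context: $\tau:\mathbb{R}^2\to\mathbb{R}^2$ denotes the $90^\circ$ counterclockwise rotation. The polar of a set $S\subseteq\mathbb{R}^2$ is $S^{\circ}=\{x\in\mathbb{R}^2: y^\top x\le 1\text{ for all }y\in S\}$. *)

theory Defs
  imports "HOL-Analysis.Analysis"
begin

definition rot90 :: "real^2 \<Rightarrow> real^2" where
  "rot90 x = vector [- (x $ 2), x $ 1]"

definition polar :: "(real^2) set \<Rightarrow> (real^2) set" where
  "polar S = {x. \<forall>y\<in>S. y \<bullet> x \<le> 1}"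

end

theory Submission
  imports Defs
begin

lemma rot_c: "rot90 x $ 1 = - x$2" "rot90 x $ 2 = x$1"
  by (simp_all add: rot90_def)

lemma inner2: "(x::real^2) \<bullet> y = x$1*y$1 + x$2*y$2"
  by (simp add: inner_vec_def sum_2)

lemma rot_inner: "rot90 x \<bullet> rot90 y = x \<bullet> y"
  by (simp add: inner2 rot_c)

lemma rot_rot: "rot90 (rot90 x) = - x"
  by (simp add: vec_eq_iff forall_2 rot_c)

lemma key: "transpose g *v rot90 (g *v v) = det (g::real^2^2) *\<^sub>R rot90 v"
  by (simp add: vec_eq_iff forall_2 matrix_vector_mult_def sum_2 transpose_def det_2 rot_c algebra_simps)

lemma tr_dot: "(g *v y) \<bullet> x = y \<bullet> (transpose (g::real^2^2) *v x)"
  by (simp add: inner2 matrix_vector_mult_def sum_2 transpose_def algebra_simps)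

lemma rot_scale: "rot90 (c *\<^sub>R v) = c *\<^sub>R rot90 v"
  by (simp add: vec_eq_iff forall_2 rot_c)

lemma rot_inner2: "rot90 y \<bullet> x = y \<bullet> (- rot90 x)"
  by (simp add: inner2 rot_c)

lemma polar_rot: "polar (rot90 ` S) = rot90 ` polar S"
proof
  show "polar (rot90 ` S) \<subseteq> rot90 ` polar S"
  proof
    fix x assume x: "x \<in> polar (rot90 ` S)"
    have "- rot90 x \<in> polar S"
      unfolding polar_def
    proof (safe)
      fix y assume "y \<in> S"
      hence "rot90 y \<bullet> x \<le> 1" using x unfolding polar_def by auto
      thus "y \<bullet> - rot90 x \<le> 1" by (simp only: rot_inner2)
    qed
    moreover have "x = rot90 (- rot90 x)"
      by (simp add: vec_eq_iff forall_2 rot_c)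
    ultimately show "x \<in> rot90 ` polar S" by blast
  qed
next
  show "rot90 ` polar S \<subseteq> polar (rot90 ` S)"
    unfolding polar_def by (auto simp: rot_inner)
qed

theorem proposition3:
  fixes P :: "(real^2) set" and g :: "real^2^2"
  assumes "P \<noteq> {}" and "closed P" and "convex P"
    and "rot90 ` P = polar P"
    and "det g = 1 \<or> det g = -1"
  shows "rot90 ` ((\<lambda>x. g *v x) ` P) = polar ((\<lambda>x. g *v x) ` P)"
proof -
  have sub: "P \<subseteq> polar (polar P)" unfolding polar_def by (auto simp: inner_commute)
  have "polar (polar P) = rot90 ` rot90 ` P"
    using assms(4) polar_rot by metis
  hence symm: "\<And>y. y \<in> P \<Longrightarrow> - y \<in> P"
    using sub by (auto simp: rot_rot)
  define d where "d = det g"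
  have dP: "\<And>y. y \<in> P \<Longrightarrow> d *\<^sub>R y \<in> P"
    using assms(5) symm unfolding d_def by auto
  have dd: "d * d = 1" using assms(5) unfolding d_def by auto
  have pol: "\<And>x. x \<in> polar ((\<lambda>x. g *v x) ` P) \<longleftrightarrow> transpose g *v x \<in> polar P"
    unfolding polar_def by (auto simp: tr_dot)
  have inv: "invertible (transpose g)"
    using assms(5) by (auto simp: invertible_det_nz det_transpose)
  have inj: "\<And>a b. transpose g *v a = transpose g *v b \<Longrightarrow> a = b"
    using inj_matrix_vector_mult[OF inv] by (simp add: inj_def)
  show ?thesis
  proof (rule set_eqI)
    fix x
    show "x \<in> rot90 ` (\<lambda>x. g *v x) ` P \<longleftrightarrow> x \<in> polar ((\<lambda>x. g *v x) ` P)"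
    proof
      assume "x \<in> rot90 ` (\<lambda>x. g *v x) ` P"
      then obtain y where y: "y \<in> P" "x = rot90 (g *v y)" by auto
      have "transpose g *v x = rot90 (d *\<^sub>R y)"
        using key[of g y] y(2) unfolding d_def by (simp only: rot_scale)
      hence "transpose g *v x \<in> polar P" using assms(4) dP[OF y(1)] by auto
      thus "x \<in> polar ((\<lambda>x. g *v x) ` P)" using pol by simp
    next
      assume "x \<in> polar ((\<lambda>x. g *v x) ` P)"
      hence "transpose g *v x \<in> rot90 ` P" using pol assms(4) by simp
      then obtain z where z: "z \<in> P" "transpose g *v x = rot90 z" by auto
      have "transpose g *v rot90 (g *v (d *\<^sub>R z)) = rot90 z"
        using key[of g "d *\<^sub>R z"] dd unfolding d_def
        by (simp add: rot_scale)
      hence "x = rot90 (g *v (d *\<^sub>R z))" using z(2) inj by metis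
      thus "x \<in> rot90 ` (\<lambda>x. g *v x) ` P" using dP[OF z(1)] by blast
    qed
  qed
qed

end
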